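(* Let $\{|j\rangle\}_{j=1}^n$ be a fixed orthonormal (reference) basis of an $n$-dimensional Hilbert space, and let $Z_1,\dots,Z_n$ be Hermitian operators, all diagonal in the reference basis, with $\operatorname{tr}Z_jZ_k=\delta_{jk}$. For a state $\rho$, define \[ \mathcal{C}(\rho):=\min_{\{p_l,|\psi_l\rangle\}}\sum_lp_l\,\mathcal{F}_1\Big(e^{i\sum_j\theta_jZ_j}|\psi_l\rangle\langle\psi_l|e^{-i\sum_j\theta_jZ_j}\Big), \] where the minimum is over all ensemble decompositions $\rho=\sum_lp_l|\psi_l\rangle\langle\psi_l|$. Then \[ \mathcal{C}(\rho)=\frac4n\Big(1-\max_{\{p_l,|\psi_l\rangle\}}\sum_lp_l\sum_{j=1}^n|\langle j|\psi_l\rangle|^4\Big), \] with the maximum again over all ensemble decompositions of $\rho$.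
   Context: For a parametric family $\varrho_\theta$, $\theta\in\mathbb{R}^n$, the arithmetic-mean QFI is $\mathcal{F}_1(\varrho_\theta):=\frac1n\operatorname{tr}F(\varrho_\theta)$, where $F$ is the SLD-based QFI matrix $[F]_{jk}=\operatorname{Re}\operatorname{tr}(L_jL_k\varrho_\theta)$, with Hermitian $L_j$ satisfying $\partial_j\varrho_\theta=(L_j\varrho_\theta+\varrho_\theta L_j)/2$. (For the unitary families above, $F$ does not depend on $\theta$.) *)

theory Defs
  imports "HOL-Analysis.Analysis"
begin

text \<open>Matrices are complex^'m^'m, indexed by the reference basis (type 'm).\<close>

definition cadj :: "complex^'m^'m \<Rightarrow> complex^'m^'m" where
  "cadj A = (\<chi> i j. cnj (A $ j $ i))"

definition hermitian_mat :: "complex^'m^'m \<Rightarrow> bool" where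
  "hermitian_mat A \<longleftrightarrow> cadj A = A"

definition diagonal_mat :: "complex^'m^'m \<Rightarrow> bool" where
  "diagonal_mat A \<longleftrightarrow> (\<forall>a b. a \<noteq> b \<longrightarrow> A $ a $ b = 0)"

definition density_mat :: "complex^'m^'m \<Rightarrow> bool" where
  "density_mat \<rho> \<longleftrightarrow> hermitian_mat \<rho> \<and>
     (\<forall>v::complex^'m. 0 \<le> Re (\<Sum>a\<in>UNIV. \<Sum>b\<in>UNIV. cnj (v $ a) * \<rho> $ a $ b * v $ b)) \<and>
     trace \<rho> = 1"

definition proj :: "complex^'m \<Rightarrow> complex^'m^'m" where
  "proj \<psi> = (\<chi> a b. \<psi> $ a * cnj (\<psi> $ b))"

definition is_SLD :: "(real^'n \<Rightarrow> complex^'m^'m) \<Rightarrow> real^'n \<Rightarrow> 'n \<Rightarrow> complex^'m^'m \<Rightarrow> bool" where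
  "is_SLD \<rho> \<theta> j L \<longleftrightarrow> hermitian_mat L \<and>
     ((\<lambda>t. \<rho> (\<theta> + t *\<^sub>R axis j 1)) has_vector_derivative
        ((1/2::real) *\<^sub>R (L ** \<rho> \<theta> + \<rho> \<theta> ** L))) (at 0)"

definition SLD :: "(real^'n \<Rightarrow> complex^'m^'m) \<Rightarrow> real^'n \<Rightarrow> 'n \<Rightarrow> complex^'m^'m" where
  "SLD \<rho> \<theta> j = (SOME L. is_SLD \<rho> \<theta> j L)"

definition QFI :: "(real^'n \<Rightarrow> complex^'m^'m) \<Rightarrow> real^'n \<Rightarrow> 'n \<Rightarrow> 'n \<Rightarrow> real" where
  "QFI \<rho> \<theta> j k = Re (trace (SLD \<rho> \<theta> j ** SLD \<rho> \<theta> k ** \<rho> \<theta>))"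

definition QFI_mean :: "(real^'n \<Rightarrow> complex^'m^'m) \<Rightarrow> real^'n \<Rightarrow> real" where
  "QFI_mean \<rho> \<theta> = (\<Sum>j\<in>UNIV. QFI \<rho> \<theta> j j) / real CARD('n)"

text \<open>exp(i sum_j theta_j Z_j) for Z_j diagonal in the reference basis: the exponential of a
  diagonal matrix is the diagonal matrix of the exponentials of the entries.\<close>
definition Uphase :: "('n \<Rightarrow> complex^'m^'m) \<Rightarrow> real^'n \<Rightarrow> complex^'m^'m" where
  "Uphase Z \<theta> = (\<chi> a b. if a = b then exp (\<i> * (\<Sum>j\<in>UNIV. complex_of_real (\<theta> $ j) * Z j $ a $ a)) else 0)"

definition ensemble :: "complex^'m^'m \<Rightarrow> (real \<times> (complex^'m)) list \<Rightarrow> bool" where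
  "ensemble \<rho> E \<longleftrightarrow> (\<forall>(p, \<psi>)\<in>set E. 0 \<le> p \<and> norm \<psi> = 1) \<and>
     (\<Sum>(p, \<psi>)\<leftarrow>E. p) = 1 \<and>
     (\<Sum>(p, \<psi>)\<leftarrow>E. p *\<^sub>R proj \<psi>) = \<rho>"

text \<open>The quantity C(rho) (the SLD-QFI of the encoded family evaluated at parameter theta;
  it does not depend on theta).\<close>
definition Ccoh :: "('m \<Rightarrow> complex^'m^'m) \<Rightarrow> real^'m \<Rightarrow> complex^'m^'m \<Rightarrow> real" where
  "Ccoh Z \<theta> \<rho> = (INF E \<in> {E. ensemble \<rho> E}.
      (\<Sum>(p, \<psi>)\<leftarrow>E. p * QFI_mean (\<lambda>\<theta>'. Uphase Z \<theta>' ** proj \<psi> ** cadj (Uphase Z \<theta>')) \<theta>))"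

end

theory Submission
  imports Defs
begin

lemma herm_entry: "hermitian_mat A \<Longrightarrow> A $ b $ a = cnj (A $ a $ b)"
  unfolding hermitian_mat_def cadj_def
  by (metis (no_types, lifting) complex_cnj_cnj vec_lambda_beta)

lemma cnorm_sq: "(z::complex) * cnj z = complex_of_real (cmod z ^ 2)"
  by (metis complex_norm_square of_real_power)

lemma pure_qfi:
  fixes \<phi> :: "complex^'n" and z :: "'n \<Rightarrow> real" and L :: "complex^'n^'n"
  assumes nrm: "(\<Sum>a\<in>UNIV. cmod (\<phi>$a)^2) = 1"
  and hL: "hermitian_mat L"
  and eq: "\<And>a b. (\<Sum>c\<in>UNIV. L$a$c * \<phi>$c) * cnj(\<phi>$b) + \<phi>$a * (\<Sum>c\<in>UNIV. cnj(\<phi>$c) * L$c$b)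
              = 2*\<i>*(z a - z b) * \<phi>$a * cnj(\<phi>$b)"
  shows "Re (trace (L ** L ** proj \<phi>)) =
     4*((\<Sum>a\<in>UNIV. z a^2 * cmod(\<phi>$a)^2) - (\<Sum>a\<in>UNIV. z a * cmod(\<phi>$a)^2)^2)"
proof -
  define w where "w a = (\<Sum>c\<in>UNIV. L$a$c * \<phi>$c)" for a
  have h1: "(\<Sum>c\<in>UNIV. cnj(\<phi>$c) * L$c$b) = cnj (w b)" for b
    unfolding w_def by (simp add: herm_entry[OF hL, of _ b] mult.commute)
  define m where "m = (\<Sum>a\<in>UNIV. z a * cmod(\<phi>$a)^2)"
  define s where "s = (\<Sum>b\<in>UNIV. cnj(\<phi>$b) * w b)"
  have nrmc: "(\<Sum>b\<in>UNIV. cnj(\<phi>$b) * \<phi>$b) = 1"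
  proof -
    have "(\<Sum>b\<in>UNIV. cnj(\<phi>$b) * \<phi>$b) = (\<Sum>b\<in>UNIV. complex_of_real (cmod (\<phi>$b)^2))"
      by (intro sum.cong refl) (metis cnorm_sq mult.commute)
    also have "\<dots> = complex_of_real (\<Sum>b\<in>UNIV. cmod (\<phi>$b)^2)" by simp
    finally show ?thesis using nrm by simp
  qed
  have mc: "complex_of_real m = (\<Sum>b\<in>UNIV. complex_of_real (z b) * (cnj(\<phi>$b) * \<phi>$b))"
  proof -
    have "(\<Sum>b\<in>UNIV. complex_of_real (z b) * (cnj(\<phi>$b) * \<phi>$b)) = (\<Sum>b\<in>UNIV. complex_of_real (z b * cmod (\<phi>$b)^2))"
      by (intro sum.cong refl) (metis cnorm_sq mult.commute of_real_mult)
    then show ?thesis unfolding m_def by simp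
  qed
  have h2: "w a + \<phi>$a * cnj s = 2*\<i>*(z a - m)*\<phi>$a" for a
  proof -
    have e1: "(w a * cnj(\<phi>$b) + \<phi>$a * cnj (w b)) * \<phi>$b
       = complex_of_real (z a) * (2*\<i>*\<phi>$a) * (cnj(\<phi>$b) * \<phi>$b) - (2*\<i>*\<phi>$a) * (complex_of_real (z b) * (cnj(\<phi>$b) * \<phi>$b))" for b
    proof -
      have "w a * cnj(\<phi>$b) + \<phi>$a * cnj (w b) = 2*\<i>*(z a - z b) * \<phi>$a * cnj(\<phi>$b)"
        using eq[of a b] unfolding h1 w_def .
      from arg_cong[OF this, of "\<lambda>x. x * \<phi>$b"] show ?thesis by (simp add: algebra_simps)
    qed
    have "(\<Sum>b\<in>UNIV. (w a * cnj(\<phi>$b) + \<phi>$a * cnj (w b)) * \<phi>$b)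
       = w a * (\<Sum>b\<in>UNIV. cnj(\<phi>$b) * \<phi>$b) + \<phi>$a * (\<Sum>b\<in>UNIV. cnj (w b) * \<phi>$b)"
      by (simp add: distrib_right sum.distrib sum_distrib_left mult.assoc)
    also have "(\<Sum>b\<in>UNIV. cnj (w b) * \<phi>$b) = cnj s" unfolding s_def by (simp add: mult.commute)
    finally have l: "(\<Sum>b\<in>UNIV. (w a * cnj(\<phi>$b) + \<phi>$a * cnj (w b)) * \<phi>$b) = w a + \<phi>$a * cnj s"
      unfolding nrmc by simp
    have r: "(\<Sum>b\<in>UNIV. (w a * cnj(\<phi>$b) + \<phi>$a * cnj (w b)) * \<phi>$b)
       = complex_of_real (z a) * (2*\<i>*\<phi>$a) * (\<Sum>b\<in>UNIV. cnj(\<phi>$b) * \<phi>$b) - (2*\<i>*\<phi>$a) * (\<Sum>b\<in>UNIV. complex_of_real (z b) * (cnj(\<phi>$b) * \<phi>$b))"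
      unfolding e1 by (simp add: sum_subtractf sum_distrib_left)
    show ?thesis using l r unfolding nrmc mc[symmetric] by (simp add: algebra_simps)
  qed
  have sreal: "cnj s = s"
  proof -
    have "cnj s = (\<Sum>b\<in>UNIV. \<phi>$b * (\<Sum>c\<in>UNIV. cnj(\<phi>$c) * L$c$b))"
      unfolding s_def h1 by (simp add: mult.commute)
    also have "\<dots> = (\<Sum>b\<in>UNIV. \<Sum>c\<in>UNIV. cnj(\<phi>$c) * L$c$b * \<phi>$b)"
      by (simp add: sum_distrib_left mult.commute)
    also have "\<dots> = (\<Sum>c\<in>UNIV. \<Sum>b\<in>UNIV. cnj(\<phi>$c) * L$c$b * \<phi>$b)"
      by (rule sum.swap)
    also have "\<dots> = s" unfolding s_def w_def by (simp add: sum_distrib_left mult.assoc)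
    finally show ?thesis .
  qed
  have w': "w a = 2*\<i>*(z a - m)*\<phi>$a - \<phi>$a * cnj s" for a
    using h2[of a] by (simp add: eq_diff_eq)
  have "s = - cnj s"
  proof -
    have "s = (\<Sum>a\<in>UNIV. cnj(\<phi>$a) * w a)" by (simp add: s_def)
    also have "\<dots> = (\<Sum>a\<in>UNIV. cnj(\<phi>$a) * (2*\<i>*(z a - m)*\<phi>$a - \<phi>$a * cnj s))"
      by (simp only: w')
    also have "\<dots> = (\<Sum>a\<in>UNIV. 2*\<i>*(complex_of_real (z a) * (cnj(\<phi>$a) * \<phi>$a)) - 2*\<i>*complex_of_real m * (cnj(\<phi>$a) * \<phi>$a)
         - cnj s * (cnj(\<phi>$a) * \<phi>$a))"
      by (intro sum.cong refl) (simp add: ring_distribs mult.commute mult.left_commute)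
    also have "\<dots> = 2*\<i>*(\<Sum>a\<in>UNIV. complex_of_real (z a) * (cnj(\<phi>$a) * \<phi>$a)) - 2*\<i>*complex_of_real m * (\<Sum>a\<in>UNIV. cnj(\<phi>$a) * \<phi>$a)
         - cnj s * (\<Sum>a\<in>UNIV. cnj(\<phi>$a) * \<phi>$a)"
      by (simp add: sum_subtractf sum_distrib_left)
    finally show ?thesis unfolding nrmc mc[symmetric] by simp
  qed
  then have "s = - s" using sreal by simp
  then have s0: "s = 0" by (simp add: equal_neg_zero)
  have wv: "w a = 2*\<i>*(z a - m)*\<phi>$a" for a using h2[of a] s0 by simp
  have "trace (L ** L ** proj \<phi>) = (\<Sum>a\<in>UNIV. \<Sum>k\<in>UNIV. \<Sum>c\<in>UNIV. L$a$c * L$c$k * \<phi>$k * cnj (\<phi>$a))"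
    by (simp add: trace_def matrix_matrix_mult_def proj_def sum_distrib_right mult.assoc)
  also have "\<dots> = (\<Sum>a\<in>UNIV. \<Sum>c\<in>UNIV. \<Sum>k\<in>UNIV. cnj (\<phi>$a) * L$a$c * (L$c$k * \<phi>$k))"
    by (rule sum.cong[OF refl], subst sum.swap, simp add: mult_ac)
  also have "\<dots> = (\<Sum>a\<in>UNIV. \<Sum>c\<in>UNIV. cnj (\<phi>$a) * L$a$c * w c)"
    unfolding w_def by (simp add: sum_distrib_left)
  also have "\<dots> = (\<Sum>c\<in>UNIV. \<Sum>a\<in>UNIV. cnj (\<phi>$a) * L$a$c * w c)"
    by (rule sum.swap)
  also have "\<dots> = (\<Sum>c\<in>UNIV. w c * (\<Sum>a\<in>UNIV. cnj(\<phi>$a) * L$a$c))"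
    by (simp add: sum_distrib_left mult.commute)
  also have "\<dots> = (\<Sum>c\<in>UNIV. complex_of_real (cmod (w c) ^ 2))"
    unfolding h1 cnorm_sq by simp
  finally have tr: "Re (trace (L ** L ** proj \<phi>)) = (\<Sum>c\<in>UNIV. cmod (w c) ^ 2)" by simp
  have "cmod (w c) ^ 2 = 4 * ((z c)^2 * cmod(\<phi>$c)^2) - 8*m*(z c * cmod(\<phi>$c)^2) + 4*m^2*cmod(\<phi>$c)^2" for c
  proof -
    have "cmod (w c) = 2 * \<bar>z c - m\<bar> * cmod (\<phi>$c)" unfolding wv
      by (simp add: norm_mult flip: of_real_diff)
    then show ?thesis by (simp add: power_mult_distrib power2_eq_square algebra_simps)
  qed
  then have "(\<Sum>c\<in>UNIV. cmod (w c) ^ 2) = 4 * (\<Sum>c\<in>UNIV. (z c)^2 * cmod(\<phi>$c)^2) - 8*m*m + 4*m^2*(\<Sum>c\<in>UNIV. cmod(\<phi>$c)^2)"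
    unfolding m_def
    by (simp add: sum_subtractf sum.distrib sum_distrib_left)
  then show ?thesis unfolding tr m_def nrm by (simp add: power2_eq_square algebra_simps)
qed

lemma vec_hvd:
  fixes f :: "real \<Rightarrow> 'a::real_normed_vector^'n"
  assumes "\<And>i. ((\<lambda>t. f t $ i) has_vector_derivative (f' $ i)) (at x)"
  shows "(f has_vector_derivative f') (at x)"
  using assms unfolding has_vector_derivative_def has_derivative_at_within
  by (auto intro!: vec_tendstoI bounded_linear_scaleR_left)

lemma entry_deriv: "((\<lambda>t::real. c * exp(complex_of_real t * k)) has_vector_derivative (c*k)) (at 0)"
proof -
  have "((\<lambda>x. c * exp(x*k)) has_field_derivative c*(exp(complex_of_real 0 * k)*k)) (at (complex_of_real 0))"
    by (auto intro!: derivative_eq_intros)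
  then show ?thesis using has_vector_derivative_real_field by fastforce
qed

lemma mat_hvd:
  fixes F :: "real \<Rightarrow> complex^'m^'m"
  assumes "\<And>t a b. F t $ a $ b = C $ a $ b * exp(complex_of_real t * K a b)"
  shows "(F has_vector_derivative (\<chi> a b. C $ a $ b * K a b)) (at 0)"
  apply (rule vec_hvd)+
  apply (simp add: assms)
  apply (rule entry_deriv)
  done

lemma sld_cand:
  fixes \<phi> :: "complex^'n" and z :: "'n \<Rightarrow> real"
  assumes nrm: "(\<Sum>a\<in>UNIV. cmod (\<phi>$a)^2) = 1"
  defines "L0 \<equiv> (\<chi> a b. 2*\<i>*(z a - z b) * \<phi>$a * cnj(\<phi>$b))"
  shows "hermitian_mat L0"
    and "(1/2::real) *\<^sub>R (L0 ** proj \<phi> + proj \<phi> ** L0) = (\<chi> a b. proj \<phi> $ a $ b * (\<i> * (z a - z b)))"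
proof -
  show "hermitian_mat L0" unfolding hermitian_mat_def cadj_def L0_def
    by (rule vec_eq_iff[THEN iffD2], simp add: vec_eq_iff algebra_simps)
  define m where "m = (\<Sum>c\<in>UNIV. complex_of_real (z c) * (cnj(\<phi>$c) * \<phi>$c))"
  have nrmc: "(\<Sum>b\<in>UNIV. cnj(\<phi>$b) * \<phi>$b) = 1"
  proof -
    have "(\<Sum>b\<in>UNIV. cnj(\<phi>$b) * \<phi>$b) = (\<Sum>b\<in>UNIV. complex_of_real (cmod (\<phi>$b)^2))"
      by (intro sum.cong refl) (metis complex_norm_square of_real_power mult.commute)
    also have "\<dots> = complex_of_real (\<Sum>b\<in>UNIV. cmod (\<phi>$b)^2)" by simp
    finally show ?thesis using nrm by simp
  qed
  have e1: "(L0 ** proj \<phi>) $ a $ b = 2*\<i>*\<phi>$a*cnj(\<phi>$b) * (complex_of_real (z a) - m)" for a b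
  proof -
    have "(L0 ** proj \<phi>) $ a $ b = (\<Sum>c\<in>UNIV. 2*\<i>*\<phi>$a*cnj(\<phi>$b) * (complex_of_real (z a) * (cnj(\<phi>$c) * \<phi>$c) - complex_of_real (z c) * (cnj(\<phi>$c) * \<phi>$c)))"
      unfolding L0_def proj_def matrix_matrix_mult_def vec_lambda_beta by (intro sum.cong refl) (simp add: algebra_simps)
    also have "\<dots> = 2*\<i>*\<phi>$a*cnj(\<phi>$b) * (complex_of_real (z a) * (\<Sum>c\<in>UNIV. cnj(\<phi>$c) * \<phi>$c) - m)"
      unfolding m_def by (simp only: right_diff_distrib sum_subtractf sum_distrib_left)
    finally show ?thesis unfolding nrmc by simp
  qed
  have e2: "(proj \<phi> ** L0) $ a $ b = 2*\<i>*\<phi>$a*cnj(\<phi>$b) * (m - complex_of_real (z b))" for a b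
  proof -
    have "(proj \<phi> ** L0) $ a $ b = (\<Sum>c\<in>UNIV. 2*\<i>*\<phi>$a*cnj(\<phi>$b) * (complex_of_real (z c) * (cnj(\<phi>$c) * \<phi>$c) - complex_of_real (z b) * (cnj(\<phi>$c) * \<phi>$c)))"
      unfolding L0_def proj_def matrix_matrix_mult_def vec_lambda_beta by (intro sum.cong refl) (simp add: algebra_simps)
    also have "\<dots> = 2*\<i>*\<phi>$a*cnj(\<phi>$b) * (m - complex_of_real (z b) * (\<Sum>c\<in>UNIV. cnj(\<phi>$c) * \<phi>$c))"
      unfolding m_def by (simp only: right_diff_distrib sum_subtractf sum_distrib_left)
    finally show ?thesis unfolding nrmc by simp
  qed
  show "(1/2::real) *\<^sub>R (L0 ** proj \<phi> + proj \<phi> ** L0) = (\<chi> a b. proj \<phi> $ a $ b * (\<i> * (z a - z b)))"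
    unfolding vec_eq_iff vector_scaleR_component vector_add_component e1 e2
    by (simp add: proj_def scaleR_conv_of_real algebra_simps)
qed

lemma sld_eq:
  fixes \<phi> :: "complex^'n" and z :: "'n \<Rightarrow> real" and L :: "complex^'n^'n"
  assumes hL: "hermitian_mat L"
  and "(1/2::real) *\<^sub>R (L ** proj \<phi> + proj \<phi> ** L) = (\<chi> a b. proj \<phi> $ a $ b * (\<i> * (z a - z b)))"
  shows "(\<Sum>c\<in>UNIV. L$a$c * \<phi>$c) * cnj(\<phi>$b) + \<phi>$a * (\<Sum>c\<in>UNIV. cnj(\<phi>$c) * L$c$b)
              = 2*\<i>*(z a - z b) * \<phi>$a * cnj(\<phi>$b)"
proof -
  from assms(2) have "((1/2::real) *\<^sub>R (L ** proj \<phi> + proj \<phi> ** L)) $ a $ b = proj \<phi> $ a $ b * (\<i> * (z a - z b))"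
    by simp
  then have h: "(1/2) * ((\<Sum>c\<in>UNIV. L$a$c * (\<phi>$c * cnj(\<phi>$b))) + (\<Sum>c\<in>UNIV. \<phi>$a * cnj(\<phi>$c) * L$c$b))
     = \<phi>$a * cnj(\<phi>$b) * (\<i> * (z a - z b))"
    unfolding vector_scaleR_component vector_add_component
    by (simp add: proj_def matrix_matrix_mult_def scaleR_conv_of_real)
  have "(\<Sum>c\<in>UNIV. L$a$c * (\<phi>$c * cnj(\<phi>$b))) + (\<Sum>c\<in>UNIV. \<phi>$a * cnj(\<phi>$c) * L$c$b)
     = 2 * ((1/2) * ((\<Sum>c\<in>UNIV. L$a$c * (\<phi>$c * cnj(\<phi>$b))) + (\<Sum>c\<in>UNIV. \<phi>$a * cnj(\<phi>$c) * L$c$b)))"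
    by simp
  also have "\<dots> = 2 * (\<phi>$a * cnj(\<phi>$b) * (\<i> * (z a - z b)))" unfolding h ..
  finally have h2: "(\<Sum>c\<in>UNIV. L$a$c * (\<phi>$c * cnj(\<phi>$b))) + (\<Sum>c\<in>UNIV. \<phi>$a * cnj(\<phi>$c) * L$c$b)
     = 2 * (\<phi>$a * cnj(\<phi>$b) * (\<i> * (z a - z b)))" .
  have "(\<Sum>c\<in>UNIV. L$a$c * (\<phi>$c * cnj(\<phi>$b))) = (\<Sum>c\<in>UNIV. L$a$c * \<phi>$c) * cnj(\<phi>$b)"
    by (simp add: sum_distrib_right mult.assoc)
  moreover have "(\<Sum>c\<in>UNIV. \<phi>$a * cnj(\<phi>$c) * L$c$b) = \<phi>$a * (\<Sum>c\<in>UNIV. cnj(\<phi>$c) * L$c$b)"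
    by (simp add: sum_distrib_left mult.assoc)
  ultimately show ?thesis using h2 by (simp add: mult_ac)
qed

definition zr :: "('k::finite \<Rightarrow> complex^'m^'m) \<Rightarrow> 'k \<Rightarrow> 'm \<Rightarrow> real" where
  "zr Z j a = Re (Z j $ a $ a)"

definition ph :: "('k::finite \<Rightarrow> complex^'m^'m) \<Rightarrow> complex^'m \<Rightarrow> real^'k \<Rightarrow> complex^'m" where
  "ph Z \<psi> \<theta> = (\<chi> a. exp(\<i> * complex_of_real (\<Sum>j\<in>UNIV. \<theta>$j * zr Z j a)) * \<psi>$a)"

lemma herm_diag_real: "hermitian_mat A \<Longrightarrow> A $ a $ a = complex_of_real (Re (A $ a $ a))"
  using herm_entry[of A a a] by (simp add: complex_eq_iff)

lemma ifz_mult: "(if P then x else (0::'a::mult_zero)) * y = (if P then x * y else 0)"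
  by simp
lemma mult_ifz: "y * (if P then x else (0::'a::mult_zero)) = (if P then y * x else 0)"
  by simp

lemma diag_mult_left: "(\<chi> a b. if a = b then d a else 0) ** M = (\<chi> a b. d a * M $ a $ b)"
  unfolding matrix_matrix_mult_def vec_eq_iff by (simp add: ifz_mult sum.delta)

lemma diag_mult_right: "M ** (\<chi> a b. if a = b then d a else 0) = (\<chi> a b. M $ a $ b * d b)"
  unfolding matrix_matrix_mult_def vec_eq_iff by (simp add: mult_ifz sum.delta')

lemma cnj_exp_i: "cnj (exp (\<i> * complex_of_real x)) = exp (- (\<i> * complex_of_real x))"
  by (simp add: exp_cnj)

lemma fam:
  assumes herm: "\<And>j. hermitian_mat (Z j)"
  shows "Uphase Z \<theta> ** proj \<psi> ** cadj (Uphase Z \<theta>) = proj (ph Z \<psi> \<theta>)"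
proof -
  have u: "Uphase Z \<theta> = (\<chi> a b. if a = b then exp(\<i> * complex_of_real (\<Sum>j\<in>UNIV. \<theta>$j * zr Z j a)) else 0)"
  proof -
    have h: "(\<Sum>j\<in>UNIV. complex_of_real (\<theta> $ j) * Z j $ a $ a) = complex_of_real (\<Sum>j\<in>UNIV. \<theta>$j * zr Z j a)" for a
      unfolding zr_def of_real_sum of_real_mult
      by (intro sum.cong refl arg_cong2[where f="(*)"] refl herm_diag_real herm)
    show ?thesis unfolding Uphase_def h ..
  qed
  have c: "cadj (Uphase Z \<theta>) = (\<chi> a b. if a = b then cnj (exp(\<i> * complex_of_real (\<Sum>j\<in>UNIV. \<theta>$j * zr Z j a))) else 0)"
    unfolding u cadj_def by (simp add: vec_eq_iff)
  show ?thesis unfolding c unfolding u diag_mult_left diag_mult_right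
    by (simp add: vec_eq_iff proj_def ph_def)
qed

lemma ph_shift:
  "proj (ph Z \<psi> (\<theta> + t *\<^sub>R axis j 1)) $ a $ b
     = proj (ph Z \<psi> \<theta>) $ a $ b * exp(complex_of_real t * (\<i> * (zr Z j a - zr Z j b)))"
proof -
  have s: "(\<Sum>k\<in>UNIV. (\<theta> + t *\<^sub>R axis j 1)$k * zr Z k a) = (\<Sum>k\<in>UNIV. \<theta>$k * zr Z k a) + t * zr Z j a" for a
  proof -
    have "(\<theta> + t *\<^sub>R axis j 1)$k * zr Z k a = \<theta>$k * zr Z k a + (if k = j then t * zr Z j a else 0)" for k
      by (simp add: axis_def algebra_simps)
    then show ?thesis by (simp add: sum.distrib)
  qed
  define ra where "ra = (\<Sum>k\<in>UNIV. \<theta>$k * zr Z k a)"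
  define rb where "rb = (\<Sum>k\<in>UNIV. \<theta>$k * zr Z k b)"
  have "proj (ph Z \<psi> (\<theta> + t *\<^sub>R axis j 1)) $ a $ b =
     exp(\<i> * complex_of_real (ra + t * zr Z j a)) * exp(- (\<i> * complex_of_real (rb + t * zr Z j b))) * (\<psi>$a * cnj(\<psi>$b))"
    unfolding proj_def ph_def s ra_def rb_def by (simp only: vec_lambda_beta complex_cnj_mult cnj_exp_i) (simp add: mult_ac)
  also have "\<dots> = exp(\<i> * complex_of_real (ra + t * zr Z j a) - (\<i> * complex_of_real (rb + t * zr Z j b))) * (\<psi>$a * cnj(\<psi>$b))"
    by (simp only: diff_conv_add_uminus exp_add)
  also have "\<dots> = exp(\<i> * complex_of_real ra - \<i> * complex_of_real rb + complex_of_real t * (\<i> * (zr Z j a - zr Z j b))) * (\<psi>$a * cnj(\<psi>$b))"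
    by (simp add: algebra_simps)
  also have "\<dots> = exp(\<i> * complex_of_real ra) * exp (- (\<i> * complex_of_real rb)) * (\<psi>$a * cnj(\<psi>$b)) * exp(complex_of_real t * (\<i> * (zr Z j a - zr Z j b)))"
    by (simp add: exp_add exp_diff exp_minus field_simps)
  also have "\<dots> = proj (ph Z \<psi> \<theta>) $ a $ b * exp(complex_of_real t * (\<i> * (zr Z j a - zr Z j b)))"
    unfolding proj_def ph_def ra_def rb_def by (simp only: vec_lambda_beta complex_cnj_mult cnj_exp_i) (simp add: mult_ac)
  finally show ?thesis .
qed

lemma norm_ph: "cmod (ph Z \<psi> \<theta> $ a) = cmod (\<psi> $ a)"
  unfolding ph_def by (simp add: norm_mult)

lemma unit_sum: "norm (\<psi>::complex^'m) = 1 \<Longrightarrow> (\<Sum>a\<in>UNIV. cmod (\<psi>$a)^2) = 1"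
  unfolding norm_vec_def L2_set_def by simp

lemma qfi_family:
  fixes Z :: "'k::finite \<Rightarrow> complex^'m^'m"
  assumes herm: "\<And>j. hermitian_mat (Z j)" and nrm: "norm \<psi> = 1"
  shows "QFI (\<lambda>\<theta>'. Uphase Z \<theta>' ** proj \<psi> ** cadj (Uphase Z \<theta>')) \<theta> j j
     = 4*((\<Sum>a\<in>UNIV. zr Z j a^2 * cmod(\<psi>$a)^2) - (\<Sum>a\<in>UNIV. zr Z j a * cmod(\<psi>$a)^2)^2)"
proof -
  define \<rho> where "\<rho> = (\<lambda>\<theta>'. Uphase Z \<theta>' ** proj \<psi> ** cadj (Uphase Z \<theta>'))"
  have r: "\<rho> = (\<lambda>\<theta>'. proj (ph Z \<psi> \<theta>'))" unfolding \<rho>_def using fam[where Z=Z, OF herm] by auto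
  define \<phi> where "\<phi> = ph Z \<psi> \<theta>"
  have n\<phi>: "(\<Sum>a\<in>UNIV. cmod (\<phi>$a)^2) = 1" unfolding \<phi>_def norm_ph using unit_sum[OF nrm] .
  define D where "D = (\<chi> a b. proj \<phi> $ a $ b * (\<i> * (zr Z j a - zr Z j b)))"
  have der: "((\<lambda>t. \<rho> (\<theta> + t *\<^sub>R axis j 1)) has_vector_derivative D) (at 0)"
    unfolding r D_def \<phi>_def
    by (rule mat_hvd[where K="\<lambda>a b. \<i> * (zr Z j a - zr Z j b)"], rule ph_shift)
  define L0 where "L0 = (\<chi> a b. 2*\<i>*(zr Z j a - zr Z j b) * \<phi>$a * cnj(\<phi>$b))"
  have "is_SLD \<rho> \<theta> j L0"
    unfolding is_SLD_def using sld_cand[OF n\<phi>, of "zr Z j"] der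
    unfolding L0_def D_def r \<phi>_def by simp
  then have sl: "is_SLD \<rho> \<theta> j (SLD \<rho> \<theta> j)" unfolding SLD_def by (rule someI)
  define L where "L = SLD \<rho> \<theta> j"
  have hL: "hermitian_mat L" using sl unfolding L_def is_SLD_def by simp
  have "((\<lambda>t. \<rho> (\<theta> + t *\<^sub>R axis j 1)) has_vector_derivative ((1/2::real) *\<^sub>R (L ** \<rho> \<theta> + \<rho> \<theta> ** L))) (at 0)"
    using sl unfolding L_def is_SLD_def by simp
  then have "(1/2::real) *\<^sub>R (L ** proj \<phi> + proj \<phi> ** L) = D"
    using der vector_derivative_unique_at unfolding r \<phi>_def by blast
  then have eq: "(\<Sum>c\<in>UNIV. L$a$c * \<phi>$c) * cnj(\<phi>$b) + \<phi>$a * (\<Sum>c\<in>UNIV. cnj(\<phi>$c) * L$c$b)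
              = 2*\<i>*(zr Z j a - zr Z j b) * \<phi>$a * cnj(\<phi>$b)" for a b
    unfolding D_def by (rule sld_eq[OF hL])
  have "QFI \<rho> \<theta> j j = Re (trace (L ** L ** proj \<phi>))"
    unfolding QFI_def L_def r \<phi>_def by simp
  also have "\<dots> = 4*((\<Sum>a\<in>UNIV. zr Z j a^2 * cmod(\<phi>$a)^2) - (\<Sum>a\<in>UNIV. zr Z j a * cmod(\<phi>$a)^2)^2)"
    by (rule pure_qfi[OF n\<phi> hL eq])
  finally show ?thesis unfolding \<rho>_def \<phi>_def norm_ph .
qed

lemma orth_real:
  fixes Z :: "'n::finite \<Rightarrow> complex^'n^'n"
  assumes herm: "\<And>j. hermitian_mat (Z j)"
    and diag: "\<And>j. diagonal_mat (Z j)"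
    and orth: "\<And>j k. trace (Z j ** Z k) = (if j = k then 1 else 0)"
  shows "(\<Sum>j\<in>UNIV. zr Z j a * zr Z j b) = (if a = b then 1 else 0)"
proof -
  define M :: "real^'n^'n" where "M = (\<chi> j a. zr Z j a)"
  have "trace (Z j ** Z k) = complex_of_real (\<Sum>a\<in>UNIV. zr Z j a * zr Z k a)" for j k
  proof -
    have "trace (Z j ** Z k) = (\<Sum>a\<in>UNIV. \<Sum>c\<in>UNIV. Z j $ a $ c * Z k $ c $ a)"
      by (simp add: trace_def matrix_matrix_mult_def)
    also have "\<dots> = (\<Sum>a\<in>UNIV. Z j $ a $ a * Z k $ a $ a)"
    proof (intro sum.cong refl)
      fix a
      have "(\<Sum>c\<in>UNIV. Z j $ a $ c * Z k $ c $ a) = (\<Sum>c\<in>UNIV. if c = a then Z j $ a $ a * Z k $ a $ a else 0)"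
        using diag[of j] unfolding diagonal_mat_def by (intro sum.cong refl) auto
      then show "(\<Sum>c\<in>UNIV. Z j $ a $ c * Z k $ c $ a) = Z j $ a $ a * Z k $ a $ a" by simp
    qed
    also have "\<dots> = (\<Sum>a\<in>UNIV. complex_of_real (zr Z j a * zr Z k a))"
      unfolding zr_def of_real_mult
      by (intro sum.cong refl arg_cong2[where f="(*)"] herm_diag_real herm)
    finally show ?thesis by simp
  qed
  then have o: "(\<Sum>a\<in>UNIV. zr Z j a * zr Z k a) = (if j = k then 1 else 0)" for j k
    using orth[of j k] by (metis of_real_eq_1_iff of_real_eq_0_iff)
  have "M ** transpose M = mat 1"
    by (simp add: vec_eq_iff matrix_matrix_mult_def transpose_def mat_def M_def o)
  then have "transpose (transpose M) ** transpose M = mat 1" by simp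
  then have "orthogonal_matrix (transpose M)" using orthogonal_matrix by blast
  then have "transpose M ** M = mat 1" unfolding orthogonal_matrix_def by simp
  then have "(transpose M ** M) $ a $ b = mat 1 $ a $ b" by simp
  then show ?thesis by (simp add: matrix_matrix_mult_def transpose_def mat_def M_def)
qed

lemma qfi_mean_val:
  fixes Z :: "'n::finite \<Rightarrow> complex^'n^'n"
  assumes herm: "\<And>j. hermitian_mat (Z j)"
    and diag: "\<And>j. diagonal_mat (Z j)"
    and orth: "\<And>j k. trace (Z j ** Z k) = (if j = k then 1 else 0)"
    and nrm: "norm \<psi> = 1"
  shows "QFI_mean (\<lambda>\<theta>'. Uphase Z \<theta>' ** proj \<psi> ** cadj (Uphase Z \<theta>')) \<theta>
       = 4 / real CARD('n) * (1 - (\<Sum>a\<in>UNIV. cmod (\<psi>$a) ^ 4))"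
proof -
  define p where "p a = cmod (\<psi>$a)^2" for a
  have o: "(\<Sum>j\<in>UNIV. zr Z j a * zr Z j b) = (if a = b then 1 else 0)" for a b
    by (rule orth_real[OF herm diag orth])
  have s1: "(\<Sum>j\<in>UNIV. \<Sum>a\<in>UNIV. zr Z j a^2 * p a) = 1"
  proof -
    have "(\<Sum>j\<in>UNIV. \<Sum>a\<in>UNIV. zr Z j a^2 * p a) = (\<Sum>a\<in>UNIV. p a * (\<Sum>j\<in>UNIV. zr Z j a * zr Z j a))"
      by (subst sum.swap) (simp add: sum_distrib_left power2_eq_square mult_ac)
    also have "\<dots> = (\<Sum>a\<in>UNIV. p a)" by (simp add: o)
    also have "\<dots> = 1" unfolding p_def by (rule unit_sum[OF nrm])
    finally show ?thesis .
  qed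
  have s2: "(\<Sum>j\<in>UNIV. (\<Sum>a\<in>UNIV. zr Z j a * p a)^2) = (\<Sum>a\<in>UNIV. cmod (\<psi>$a) ^ 4)"
  proof -
    have "(\<Sum>j\<in>UNIV. (\<Sum>a\<in>UNIV. zr Z j a * p a)^2) = (\<Sum>j\<in>UNIV. \<Sum>a\<in>UNIV. \<Sum>b\<in>UNIV. p a * p b * (zr Z j a * zr Z j b))"
      by (simp add: power2_eq_square sum_product mult_ac)
    also have "\<dots> = (\<Sum>a\<in>UNIV. \<Sum>b\<in>UNIV. \<Sum>j\<in>UNIV. p a * p b * (zr Z j a * zr Z j b))"
      by (subst sum.swap, rule sum.cong[OF refl], rule sum.swap)
    also have "\<dots> = (\<Sum>a\<in>UNIV. \<Sum>b\<in>UNIV. p a * p b * (if a = b then 1 else 0))"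
      by (simp add: sum_distrib_left[symmetric] o)
    also have "\<dots> = (\<Sum>a\<in>UNIV. p a * p a)" by (simp add: mult_ifz sum.delta)
    also have "\<dots> = (\<Sum>a\<in>UNIV. cmod (\<psi>$a) ^ 4)" unfolding p_def by (simp add: power2_eq_square power4_eq_xxxx mult.assoc)
    finally show ?thesis .
  qed
  have "QFI_mean (\<lambda>\<theta>'. Uphase Z \<theta>' ** proj \<psi> ** cadj (Uphase Z \<theta>')) \<theta>
       = (\<Sum>j\<in>UNIV. 4*((\<Sum>a\<in>UNIV. zr Z j a^2 * p a) - (\<Sum>a\<in>UNIV. zr Z j a * p a)^2)) / real CARD('n)"
    unfolding QFI_mean_def p_def qfi_family[OF herm nrm] ..
  also have "\<dots> = 4 * ((\<Sum>j\<in>UNIV. \<Sum>a\<in>UNIV. zr Z j a^2 * p a) - (\<Sum>j\<in>UNIV. (\<Sum>a\<in>UNIV. zr Z j a * p a)^2)) / real CARD('n)"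
    by (simp add: sum_distrib_left sum_subtractf)
  finally show ?thesis unfolding s1 s2 by simp
qed

definition qf :: "complex^'n^'n \<Rightarrow> complex^'n \<Rightarrow> complex^'n \<Rightarrow> complex" where
  "qf \<rho> x y = (\<Sum>a\<in>UNIV. \<Sum>b\<in>UNIV. cnj (x $ a) * \<rho> $ a $ b * y $ b)"

definition psd :: "complex^'n^'n \<Rightarrow> bool" where
  "psd \<rho> \<longleftrightarrow> (\<forall>v. 0 \<le> Re (qf \<rho> v v))"

lemma qf_add_l: "qf \<rho> (x + y) z = qf \<rho> x z + qf \<rho> y z"
  unfolding qf_def by (simp add: algebra_simps sum.distrib)
lemma qf_add_r: "qf \<rho> x (y + z) = qf \<rho> x y + qf \<rho> x z"
  unfolding qf_def by (simp add: algebra_simps sum.distrib)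
lemma qf_smult_l: "qf \<rho> (c *s x) z = cnj c * qf \<rho> x z"
  unfolding qf_def by (simp add: sum_distrib_left mult_ac)
lemma qf_smult_r: "qf \<rho> x (c *s z) = c * qf \<rho> x z"
  unfolding qf_def by (simp add: sum_distrib_left mult_ac)
lemma axis_c: "axis a (1::complex) $ x = (if x = a then 1 else 0)"
  by (simp add: axis_def)
lemma qf_axis_l: "qf \<rho> (axis a 1) y = (\<Sum>b\<in>UNIV. \<rho>$a$b * y$b)"
proof -
  have "qf \<rho> (axis a 1) y = (\<Sum>x\<in>UNIV. if x = a then (\<Sum>b\<in>UNIV. \<rho>$x$b * y$b) else 0)"
    unfolding qf_def axis_c by (intro sum.cong refl) auto
  then show ?thesis by simp
qed
lemma qf_axis_r: "qf \<rho> x (axis b 1) = (\<Sum>a\<in>UNIV. cnj (x$a) * \<rho>$a$b)"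
proof -
  have "qf \<rho> x (axis b 1) = (\<Sum>a\<in>UNIV. \<Sum>y\<in>UNIV. if y = b then cnj (x$a) * \<rho>$a$b else 0)"
    unfolding qf_def axis_c by (intro sum.cong refl) auto
  then show ?thesis by simp
qed
lemma qf_axis_axis: "qf \<rho> (axis a 1) (axis b 1) = \<rho>$a$b"
  unfolding qf_axis_l axis_c by (simp add: mult_ifz)
lemma qf_diff_mat: "qf (\<rho> - \<sigma>) x y = qf \<rho> x y - qf \<sigma> x y"
  unfolding qf_def by (simp add: algebra_simps sum_subtractf)
lemma qf_proj: "qf (proj u) x y = (\<Sum>a\<in>UNIV. cnj(x$a) * u$a) * (\<Sum>b\<in>UNIV. cnj(u$b) * y$b)"
  unfolding qf_def proj_def by (simp add: sum_product mult_ac)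

lemma psd_zero_diag:
  assumes h: "hermitian_mat \<rho>" and p: "psd \<rho>" and z: "\<rho>$a$a = 0"
  shows "\<rho>$a$b = 0"
proof (rule ccontr)
  define s where "s = \<rho>$a$b"
  assume "\<rho>$a$b \<noteq> 0"
  then have s0: "s \<noteq> 0" unfolding s_def .
  then have cs: "cmod s ^ 2 > 0" by simp
  define k where "k = (\<bar>Re (\<rho>$b$b)\<bar> + 1) / (2 * cmod s ^ 2)"
  define c where "c = - (complex_of_real k * s)"
  define w where "w = c *s axis a 1 + axis b 1"
  have "qf \<rho> w w = cnj c * (c * \<rho>$a$a + \<rho>$a$b) + (c * \<rho>$b$a + \<rho>$b$b)"
    unfolding w_def qf_add_l qf_add_r qf_smult_l qf_smult_r qf_axis_axis by (simp add: algebra_simps)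
  also have "\<dots> = - complex_of_real k * (cnj s * s + s * cnj s) + \<rho>$b$b"
    unfolding z c_def s_def herm_entry[OF h, of b a] by (simp add: algebra_simps)
  also have "\<dots> = - complex_of_real (2 * k * cmod s ^ 2) + \<rho>$b$b"
    by (simp add: cnorm_sq mult.commute[of "cnj s"])
  finally have "Re (qf \<rho> w w) = - (2 * k * cmod s ^ 2) + Re (\<rho>$b$b)" by simp
  also have "\<dots> = - (\<bar>Re (\<rho>$b$b)\<bar> + 1) + Re (\<rho>$b$b)"
    unfolding k_def using cs by (simp add: field_simps)
  also have "\<dots> < 0" by simp
  finally show False using p unfolding psd_def by (meson not_le)
qed

lemma proj_scaleR: "proj (c *\<^sub>R u) = (c^2) *\<^sub>R proj u"
  unfolding proj_def vec_eq_iff vector_scaleR_component by (simp add: scaleR_conv_of_real power2_eq_square mult_ac)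

lemma decomp_S:
  fixes S :: "'n::finite set"
  shows "finite S \<Longrightarrow> hermitian_mat \<rho> \<Longrightarrow> psd \<rho> \<Longrightarrow> (\<forall>a b. a \<notin> S \<or> b \<notin> S \<longrightarrow> \<rho>$a$b = 0)
    \<Longrightarrow> \<exists>vs. \<rho> = sum_list (map proj vs)"
proof (induction S arbitrary: \<rho> rule: finite_induct)
  case empty
  then have "\<rho> = 0" by (simp add: vec_eq_iff)
  then show ?case by (intro exI[of _ "[]"]) simp
next
  case (insert a S)
  show ?case
  proof (cases "\<rho>$a$a = 0")
    case True
    have r: "\<rho>$a$y = 0" for y by (rule psd_zero_diag[OF insert.prems(1,2) True])
    have c: "\<rho>$y$a = 0" for y using r[of y] herm_entry[OF insert.prems(1), of y a] by simp
    have "\<forall>x y. x \<notin> S \<or> y \<notin> S \<longrightarrow> \<rho>$x$y = 0"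
      using insert.prems(3) r c by (metis insertE)
    then show ?thesis using insert.IH insert.prems(1,2) by blast
  next
    case False
    define r where "r = Re (\<rho>$a$a)"
    have raa: "\<rho>$a$a = complex_of_real r" unfolding r_def by (rule herm_diag_real[OF insert.prems(1)])
    have "0 \<le> Re (qf \<rho> (axis a 1) (axis a 1))" using insert.prems(2) unfolding psd_def by blast
    then have "0 \<le> r" unfolding qf_axis_axis r_def .
    moreover have "r \<noteq> 0" using False raa by auto
    ultimately have rpos: "r > 0" by simp
    define col where "col = (\<chi> x. \<rho>$x$a)"
    define \<sigma> where "\<sigma> = \<rho> - (1/r) *\<^sub>R proj col"
    have hs: "hermitian_mat \<sigma>"
      using insert.prems(1)
      unfolding \<sigma>_def hermitian_mat_def cadj_def proj_def col_def
      by (simp add: vec_eq_iff)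
    have ps: "psd \<sigma>" unfolding psd_def
    proof
      fix w
      define s where "s = (\<Sum>b\<in>UNIV. \<rho>$a$b * w$b)"
      have q1: "qf \<rho> (axis a 1) w = s" unfolding qf_axis_l s_def ..
      have q2: "qf \<rho> w (axis a 1) = cnj s"
        unfolding qf_axis_r s_def by (simp add: herm_entry[OF insert.prems(1), of _ a] mult.commute)
      define t where "t = - s / complex_of_real r"
      have "qf \<rho> (w + t *s axis a 1) (w + t *s axis a 1)
          = qf \<rho> w w + t * cnj s + cnj t * s + cnj t * t * complex_of_real r"
        unfolding qf_add_l qf_add_r qf_smult_l qf_smult_r q1 q2 qf_axis_axis raa by (simp add: algebra_simps)
      also have "\<dots> = qf \<rho> w w - s * cnj s / complex_of_real r"
        unfolding t_def using rpos by (simp add: field_simps)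
      also have "\<dots> = qf \<sigma> w w"
      proof -
        have "(\<Sum>b\<in>UNIV. cnj (col $ b) * w $ b) = s"
          unfolding col_def s_def by (simp add: herm_entry[OF insert.prems(1), of _ a])
        moreover have "(\<Sum>b\<in>UNIV. cnj (w $ b) * col $ b) = cnj s"
          unfolding col_def s_def by (simp add: herm_entry[OF insert.prems(1), of _ a] mult.commute)
        moreover have "qf ((1/r) *\<^sub>R proj col) w w = complex_of_real (1/r) * qf (proj col) w w"
          unfolding qf_def vector_scaleR_component by (simp add: scaleR_conv_of_real sum_distrib_left mult_ac)
        ultimately show ?thesis unfolding \<sigma>_def qf_diff_mat qf_proj by (simp add: field_simps)
      qed
      finally have "qf \<sigma> w w = qf \<rho> (w + t *s axis a 1) (w + t *s axis a 1)" ..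
      then show "0 \<le> Re (qf \<sigma> w w)" using insert.prems(2) unfolding psd_def by simp
    qed
    have sup: "\<forall>x y. x \<notin> S \<or> y \<notin> S \<longrightarrow> \<sigma>$x$y = 0"
    proof (intro allI impI)
      fix x y assume xy: "x \<notin> S \<or> y \<notin> S"
      have ra: "\<rho>$a$y = complex_of_real r * (\<rho>$a$y / complex_of_real r)" for y using rpos by simp
      have col0: "x \<notin> insert a S \<Longrightarrow> col$x = 0" for x unfolding col_def using insert.prems(3) by simp
      have "\<sigma>$x$y = \<rho>$x$y - col$x * cnj (col$y) / complex_of_real r"
        unfolding \<sigma>_def proj_def vector_minus_component vector_scaleR_component by (simp add: scaleR_conv_of_real)
      moreover have "cnj (col$y) = \<rho>$a$y" "col$x = cnj (\<rho>$a$x)"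
        unfolding col_def by (simp_all add: herm_entry[OF insert.prems(1), of y a] herm_entry[OF insert.prems(1), of x a])
      moreover have "col $ a = complex_of_real r" unfolding col_def using raa by simp
      moreover have "\<rho>$x$y = 0" if "x \<notin> insert a S \<or> y \<notin> insert a S" using insert.prems(3) that by blast
      ultimately show "\<sigma>$x$y = 0" using xy col0 rpos
        apply (cases "x = a"; cases "y = a")
        apply (auto simp: raa herm_entry[OF insert.prems(1), of a x])
        done
    qed
    obtain vs where vs: "\<sigma> = sum_list (map proj vs)" using insert.IH[OF hs ps sup] by blast
    have "(1/r) *\<^sub>R proj col = proj ((1 / sqrt r) *\<^sub>R col)"
      unfolding proj_scaleR using rpos by (simp add: power_divide)
    then have "\<rho> = sum_list (map proj (((1 / sqrt r) *\<^sub>R col) # vs))"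
      using vs unfolding \<sigma>_def by (simp add: algebra_simps)
    then show ?thesis by blast
  qed
qed

lemma norm_axis_c: "norm (axis (i::'n::finite) (1::complex)) = 1"
proof -
  have "(\<Sum>x\<in>UNIV. (cmod (axis i (1::complex) $ x))^2) = (\<Sum>x\<in>UNIV. if x = i then 1 else 0)"
    by (intro sum.cong refl) (simp add: axis_c)
  then show ?thesis unfolding norm_vec_def L2_set_def by simp
qed

lemma trace_proj: "trace (proj v) = complex_of_real (norm v ^ 2)"
proof -
  have "norm v ^ 2 = (\<Sum>a\<in>UNIV. cmod (v$a)^2)"
    unfolding norm_vec_def L2_set_def by (simp add: sum_nonneg)
  then show ?thesis unfolding trace_def proj_def by (simp add: cnorm_sq)
qed

lemma trace_sum_list: "trace (sum_list (map proj vs)) = complex_of_real (sum_list (map (\<lambda>v. norm v ^ 2) vs))"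
proof (induction vs)
  case Nil
  then show ?case by (simp add: trace_def)
next
  case (Cons a vs)
  then show ?case by (simp add: trace_add trace_proj)
qed

lemma ens_exists:
  fixes \<rho> :: "complex^'n::finite^'n"
  assumes "density_mat \<rho>"
  shows "\<exists>E. ensemble \<rho> E"
proof -
  have h: "hermitian_mat \<rho>" and p: "psd \<rho>" and tr: "trace \<rho> = 1"
    using assms unfolding density_mat_def psd_def qf_def by auto
  obtain vs where vs: "\<rho> = sum_list (map proj vs)"
    using decomp_S[of UNIV \<rho>] h p by auto
  define nv where "nv v = (if v = 0 then axis undefined 1 else (1 / norm v) *\<^sub>R v)" for v :: "complex^'n"
  define E where "E = map (\<lambda>v. (norm v ^ 2, nv v)) vs"
  have n1: "norm (nv v) = 1" for v unfolding nv_def by (simp add: norm_axis_c)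
  have pr: "norm v ^ 2 *\<^sub>R proj (nv v) = proj v" for v
  proof (cases "v = 0")
    case True then show ?thesis by (simp add: proj_def vec_eq_iff)
  next
    case False then show ?thesis unfolding nv_def by (simp add: proj_scaleR power_divide)
  qed
  have "complex_of_real (sum_list (map (\<lambda>v. norm v ^ 2) vs)) = 1"
    using tr unfolding vs trace_sum_list .
  then have s1: "sum_list (map (\<lambda>v. norm v ^ 2) vs) = 1" by simp
  have "ensemble \<rho> E"
    unfolding ensemble_def E_def
    using n1 s1 pr vs by (auto simp: o_def)
  then show ?thesis by blast
qed

lemma list_lin:
  "(\<Sum>(p, \<psi>)\<leftarrow>E. p * (c * (1 - h \<psi>))) = c * ((\<Sum>(p, \<psi>)\<leftarrow>E. p) - (\<Sum>(p, \<psi>)\<leftarrow>E. p * h \<psi>))"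
  for c :: real
  by (induction E) (auto simp: algebra_simps)

lemma quart_le:
  fixes \<psi> :: "complex^'n::finite"
  assumes "norm \<psi> = 1"
  shows "(\<Sum>j\<in>UNIV. cmod (\<psi> $ j) ^ 4) \<le> 1"
proof -
  have s: "(\<Sum>a\<in>UNIV. cmod (\<psi>$a)^2) = 1" by (rule unit_sum[OF assms])
  have "cmod (\<psi>$j)^2 \<le> 1" for j
    using member_le_sum[of j UNIV "\<lambda>a. cmod (\<psi>$a)^2"] s by simp
  then have "cmod (\<psi>$j)^4 \<le> cmod (\<psi>$j)^2" for j
    using mult_left_le[of "cmod (\<psi>$j)^2" "cmod (\<psi>$j)^2"]
    by (simp add: power4_eq_xxxx power2_eq_square mult.assoc)
  then have "(\<Sum>j\<in>UNIV. cmod (\<psi> $ j) ^ 4) \<le> (\<Sum>a\<in>UNIV. cmod (\<psi>$a)^2)" by (rule sum_mono)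
  then show ?thesis using s by simp
qed

lemma inf_sup:
  fixes g :: "'a \<Rightarrow> real"
  assumes ne: "A \<noteq> {}" and le: "\<And>E. E \<in> A \<Longrightarrow> g E \<le> 1" and c: "c > 0"
  shows "(INF E\<in>A. c * (1 - g E)) = c * (1 - (SUP E\<in>A. g E))"
proof (rule antisym)
  have ba: "bdd_above (g ` A)" using le by (intro bdd_aboveI[of _ 1]) auto
  have bb: "bdd_below ((\<lambda>E. c * (1 - g E)) ` A)" using le c by (intro bdd_belowI[of _ 0]) auto
  show "c * (1 - (SUP E\<in>A. g E)) \<le> (INF E\<in>A. c * (1 - g E))"
  proof (rule cINF_greatest[OF ne])
    fix E assume "E \<in> A"
    then have "g E \<le> (SUP E\<in>A. g E)" using ba by (rule cSUP_upper)
    then show "c * (1 - (SUP E\<in>A. g E)) \<le> c * (1 - g E)" using c by simp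
  qed
  have "(SUP E\<in>A. g E) \<le> 1 - (INF E\<in>A. c * (1 - g E)) / c"
  proof (rule cSUP_least[OF ne])
    fix E assume "E \<in> A"
    then have "(INF E\<in>A. c * (1 - g E)) \<le> c * (1 - g E)" using bb by (intro cINF_lower)
    then show "g E \<le> 1 - (INF E\<in>A. c * (1 - g E)) / c" using c by (simp add: field_simps)
  qed
  then show "(INF E\<in>A. c * (1 - g E)) \<le> c * (1 - (SUP E\<in>A. g E))" using c by (simp add: field_simps)
qed

theorem mainTheorem5:
  fixes Z :: "'n \<Rightarrow> complex^'n^'n" and \<rho> :: "complex^'n^'n" and \<theta> :: "real^'n"
  assumes herm: "\<And>j. hermitian_mat (Z j)"
    and diag: "\<And>j. diagonal_mat (Z j)"
    and orth: "\<And>j k. trace (Z j ** Z k) = (if j = k then 1 else 0)"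
    and state: "density_mat \<rho>"
  shows "Ccoh Z \<theta> \<rho> = 4 / real CARD('n) *
    (1 - (SUP E \<in> {E. ensemble \<rho> E}. (\<Sum>(p, \<psi>)\<leftarrow>E. p * (\<Sum>j\<in>UNIV. cmod (\<psi> $ j) ^ 4))))"
proof -
  define c where "c = 4 / real CARD('n)"
  define g where "g E = (\<Sum>(p, \<psi>)\<leftarrow>E. p * (\<Sum>j\<in>UNIV. cmod (\<psi> $ j) ^ 4))" for E :: "(real \<times> (complex^'n)) list"
  define A where "A = {E. ensemble \<rho> E}"
  have ne: "A \<noteq> {}" unfolding A_def using ens_exists[OF state] by blast
  have cpos: "c > 0" unfolding c_def by simp
  have val: "(\<Sum>(p, \<psi>)\<leftarrow>E. p * QFI_mean (\<lambda>\<theta>'. Uphase Z \<theta>' ** proj \<psi> ** cadj (Uphase Z \<theta>')) \<theta>)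
      = c * (1 - g E)" if "E \<in> A" for E
  proof -
    have e: "ensemble \<rho> E" using that unfolding A_def by simp
    have "(\<Sum>(p, \<psi>)\<leftarrow>E. p * QFI_mean (\<lambda>\<theta>'. Uphase Z \<theta>' ** proj \<psi> ** cadj (Uphase Z \<theta>')) \<theta>)
        = (\<Sum>(p, \<psi>)\<leftarrow>E. p * (c * (1 - (\<Sum>j\<in>UNIV. cmod (\<psi> $ j) ^ 4))))"
    proof (rule arg_cong[where f=sum_list], rule map_cong[OF refl])
      fix x assume "x \<in> set E"
      then have "norm (snd x) = 1" using e unfolding ensemble_def by auto
      then show "(case x of (p, \<psi>) \<Rightarrow> p * QFI_mean (\<lambda>\<theta>'. Uphase Z \<theta>' ** proj \<psi> ** cadj (Uphase Z \<theta>')) \<theta>)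
          = (case x of (p, \<psi>) \<Rightarrow> p * (c * (1 - (\<Sum>j\<in>UNIV. cmod (\<psi> $ j) ^ 4))))"
        unfolding c_def by (cases x) (simp add: qfi_mean_val[OF herm diag orth])
    qed
    also have "\<dots> = c * (1 - g E)"
      unfolding list_lin g_def using e unfolding ensemble_def by simp
    finally show ?thesis .
  qed
  have le: "g E \<le> 1" if "E \<in> A" for E
  proof -
    have e: "ensemble \<rho> E" using that unfolding A_def by simp
    have "g E \<le> (\<Sum>(p, \<psi>)\<leftarrow>E. p)"
      unfolding g_def
    proof (rule sum_list_mono)
      fix x assume "x \<in> set E"
      then have "norm (snd x) = 1" "fst x \<ge> 0" using e unfolding ensemble_def by auto
      then show "(case x of (p, \<psi>) \<Rightarrow> p * (\<Sum>j\<in>UNIV. cmod (\<psi> $ j) ^ 4)) \<le> (case x of (p, \<psi>) \<Rightarrow> p)"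
        using quart_le[of "snd x"] mult_left_le[of "\<Sum>j\<in>UNIV. cmod (snd x $ j) ^ 4" "fst x"]
        by (cases x) simp
    qed
    then show ?thesis using e unfolding ensemble_def by simp
  qed
  have "Ccoh Z \<theta> \<rho> = (INF E\<in>A. c * (1 - g E))"
    unfolding Ccoh_def A_def[symmetric] using val by (intro INF_cong refl) auto
  also have "\<dots> = c * (1 - (SUP E\<in>A. g E))" by (rule inf_sup[OF ne le cpos])
  finally show ?thesis unfolding c_def g_def A_def .
qed

end
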